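(* Let $N\le M$, let $X_N=[x_1\ \cdots\ x_N]^\top\in\mathbb{R}^{N\times M}$ have full row rank, let $Y_N=[y_1\ \cdots\ y_N]^\top\in\mathbb{R}^N$, and let $\theta_{MN}=X_N^+Y_N$ with $X_N^+=X_N^\top(X_NX_N^\top)^{-1}$. Fix $\sigma^2>0$, a test vector $x\in\mathbb{R}^M$ and a test label $y\in\mathbb{R}$. Let $\lambda_y>0$ be a regularization factor such that the vector $$\hat\theta(z^N;x,y)=\theta_N+\left(X_{N+1}^\top X_{N+1}+\lambda_y I\right)^{-1}x\,(y-x^\top\theta_N),\qquad \theta_N=\left(X_N^\top X_N+\lambda_y I\right)^{-1}X_N^\top Y_N,$$ where $X_{N+1}=[x_1\ \cdots\ x_N\ x]^\top$, satisfies the norm constraint $\|\hat\theta(z^N;x,y)\|=\|\theta_{MN}\|$. Let $$K_0=1+x^\top X_N^+X_N^{+\top}x,\qquad \|x_\perp\|^2=x^\top\left[I-X_N^+X_N\right]x .$$ Then $$p_{\hat\theta(z^N;x,y)}(y|x)\le\frac{1}{\sqrt{2\pi\sigma^2}}\exp\left\{-\frac{(y-x^\top\theta_N)^2}{2\sigma^2K_0^2\left(1+\frac{\|x_\perp\|^2}{K_0\lambda_y}\right)^2}\right\}.$$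
   Context: For $\theta\in\mathbb{R}^M$, $p_\theta(y|x)=\frac{1}{\sqrt{2\pi\sigma^2}}\exp\{-\frac{1}{2\sigma^2}(y-x^\top\theta)^2\}$ is the Gaussian linear-regression likelihood with noise variance $\sigma^2$. $\|\cdot\|$ is the Euclidean norm. The vector $\hat\theta(z^N;x,y)$ is the ridge-regression solution (regularization $\lambda_y$) on the training set augmented by $(x,y)$, written in recursive least-squares form; it is the "genie" learner of the norm-constrained hypothesis set $\{p_\theta:\|\theta\|\le\|\theta_{MN}\|\}$. *)

theory Defs
  imports "HOL-Analysis.Analysis"
begin

definition gauss_lik :: "real \<Rightarrow> real^'m \<Rightarrow> real^'m \<Rightarrow> real \<Rightarrow> real" where
  "gauss_lik sigma2 \<theta> x y =
     1 / sqrt (2 * pi * sigma2) * exp (- (1 / (2 * sigma2)) * (y - x \<bullet> \<theta>)\<^sup>2)"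

definition pinv_row :: "real^'m^'n \<Rightarrow> real^'n^'m" where
  "pinv_row X = transpose X ** matrix_inv (X ** transpose X)"

text \<open>The matrix X_{N+1} obtained by appending the row x to X_N; the new row is indexed by None.\<close>
definition append_row :: "real^'m^'n \<Rightarrow> real^'m \<Rightarrow> real^'m^('n option)" where
  "append_row X x = (\<chi> i. case i of Some j \<Rightarrow> X $ j | None \<Rightarrow> x)"

definition ridge :: "real \<Rightarrow> real^'m^'n \<Rightarrow> real^'n \<Rightarrow> real^'m" where
  "ridge lam X Y = matrix_inv (transpose X ** X + lam *\<^sub>R mat 1) *v (transpose X *v Y)"

definition theta_hat :: "real \<Rightarrow> real^'m^'n \<Rightarrow> real^'n \<Rightarrow> real^'m \<Rightarrow> real \<Rightarrow> real^'m" where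
  "theta_hat lam X Y x y =
     ridge lam X Y +
     (y - x \<bullet> ridge lam X Y) *\<^sub>R
       (matrix_inv (transpose (append_row X x) ** append_row X x + lam *\<^sub>R mat 1) *v x)"

end

theory Submission imports Defs begin
lemma adj: fixes A :: "real^'n^'m" shows "(A *v a) \<bullet> b = a \<bullet> (transpose A *v b)"
  by (metis dot_lmul_matrix vector_transpose_matrix)
lemma inv_ker: fixes S :: "real^'n^'n"
  assumes "\<And>z. S *v z = 0 \<Longrightarrow> z = 0"
  shows "S ** matrix_inv S = mat 1 \<and> matrix_inv S ** S = mat 1"
proof -
  have "invertible S" using assms matrix_left_invertible_ker invertible_left_inverse by blast
  then show ?thesis unfolding invertible_def matrix_inv_def by (rule someI_ex)
qed
lemma app: fixes X :: "real^'m^'n" and x :: "real^'m"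
  defines "R \<equiv> (\<chi> i. case i of Some j \<Rightarrow> X $ j | None \<Rightarrow> x) :: real^'m^('n option)"
  shows "(transpose R ** R) *v v = (transpose X ** X) *v v + (x \<bullet> v) *\<^sub>R x"
  unfolding R_def
  by (simp add: vec_eq_iff matrix_vector_mult_def matrix_matrix_mult_def transpose_def UNIV_option_conv
      sum_distrib_left sum_distrib_right inner_vec_def algebra_simps sum.reindex sum.distrib)
declare transpose_matrix_vector[simp del]

theorem lemma1:
  fixes X :: "real^'m^'n" and Y :: "real^'n" and x :: "real^'m"
    and y \<sigma>2 lam :: real
  assumes "CARD('n) \<le> CARD('m)"
    and "rank X = CARD('n)"
    and "\<sigma>2 > 0"
    and "lam > 0"
    and "norm (theta_hat lam X Y x y) = norm (pinv_row X *v Y)"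
  shows "gauss_lik \<sigma>2 (theta_hat lam X Y x y) x y
    \<le> 1 / sqrt (2 * pi * \<sigma>2) *
       exp (- ((y - x \<bullet> ridge lam X Y)\<^sup>2 /
         (2 * \<sigma>2 * (1 + x \<bullet> ((pinv_row X ** transpose (pinv_row X)) *v x))\<^sup>2 *
           (1 + x \<bullet> ((mat 1 - pinv_row X ** X) *v x) /
             ((1 + x \<bullet> ((pinv_row X ** transpose (pinv_row X)) *v x)) * lam))\<^sup>2)))"
proof -
  define Xt where "Xt = transpose X"
  define G where "G = X ** Xt"
  define Gi where "Gi = matrix_inv G"
  define B where "B = Xt ** X + lam *\<^sub>R mat 1"
  define R where "R = append_row X x"
  define A where "A = transpose R ** R + lam *\<^sub>R mat 1"
  have rXt: "rank Xt = CARD('n)" using assms(2) rank_transpose Xt_def by metis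
  have injXt: "Xt *v z = 0 \<Longrightarrow> z = 0" for z
    using rXt full_rank_injective[of Xt] by (metis inj_eq matrix_vector_mult_0_right)
  have Gv: "G *v z = X *v (Xt *v z)" for z by (simp add: G_def matrix_vector_mul_assoc)
  have Bv: "B *v z = Xt *v (X *v z) + lam *\<^sub>R z" for z
    by (simp add: B_def matrix_vector_mul_assoc matrix_vector_mult_add_rdistrib matrix_vector_mult_scaleR scaleR_matrix_vector_assoc[symmetric])
  have Av: "A *v z = B *v z + (x \<bullet> z) *\<^sub>R x" for z
  proof -
    have "(transpose R ** R) *v z = (transpose X ** X) *v z + (x \<bullet> z) *\<^sub>R x"
      unfolding R_def append_row_def by (rule app)
    then show ?thesis
      by (simp add: A_def B_def Xt_def matrix_vector_mult_add_rdistrib matrix_vector_mult_scaleR scaleR_matrix_vector_assoc[symmetric])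
  qed
  have quadB: "z \<bullet> (B *v z) = (X *v z) \<bullet> (X *v z) + lam * (z \<bullet> z)" for z
    by (simp add: Bv inner_add_right adj Xt_def inner_commute)
  have GiG: "G ** Gi = mat 1 \<and> Gi ** G = mat 1"
    unfolding Gi_def
  proof (rule inv_ker)
    fix z assume "G *v z = 0"
    then have "z \<bullet> (G *v z) = 0" by simp
    then have "(Xt *v z) \<bullet> (Xt *v z) = 0" by (simp add: Gv adj Xt_def inner_commute)
    then show "z = 0" using injXt by simp
  qed
  have BiB: "B ** matrix_inv B = mat 1 \<and> matrix_inv B ** B = mat 1"
  proof (rule inv_ker)
    fix z assume "B *v z = 0"
    then have "z \<bullet> (B *v z) = 0" by simp
    then have "(X *v z) \<bullet> (X *v z) + lam * (z \<bullet> z) = 0" by (simp add: quadB)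
    moreover have "(X *v z) \<bullet> (X *v z) \<ge> 0" by simp
    ultimately have "z \<bullet> z = 0" using assms(4)
      by (smt (verit) inner_ge_zero mult_pos_pos)
    then show "z = 0" by simp
  qed
  have AiA: "A ** matrix_inv A = mat 1"
  proof -
    have "A ** matrix_inv A = mat 1 \<and> matrix_inv A ** A = mat 1"
    proof (rule inv_ker)
      fix z assume "A *v z = 0"
      then have "z \<bullet> (A *v z) = 0" by simp
      then have "(X *v z) \<bullet> (X *v z) + lam * (z \<bullet> z) + (x \<bullet> z)^2 = 0"
        by (simp add: Av inner_add_right quadB power2_eq_square inner_commute)
      moreover have "(X *v z) \<bullet> (X *v z) \<ge> 0" by simp
      ultimately have "z \<bullet> z = 0" using assms(4)
        by (smt (verit) inner_ge_zero mult_pos_pos zero_le_power2)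
      then show "z = 0" by simp
    qed
    then show ?thesis by simp
  qed
  define u where "u = matrix_inv B *v x"
  define v where "v = matrix_inv A *v x"
  have Bu: "B *v u = x" using BiB by (simp add: u_def matrix_vector_mul_assoc)
  have Av': "A *v v = x" using AiA by (simp add: v_def matrix_vector_mul_assoc)
  have "B *v v = (1 - x \<bullet> v) *\<^sub>R x" using Av' Av[of v] by (simp add: algebra_simps)
  then have "matrix_inv B *v (B *v v) = (1 - x \<bullet> v) *\<^sub>R u"
    by (simp add: u_def matrix_vector_mult_scaleR)
  then have vu: "v = (1 - x \<bullet> v) *\<^sub>R u" using BiB by (simp add: matrix_vector_mul_assoc)
  define q where "q = x \<bullet> u"
  have xv: "x \<bullet> v = (1 - x \<bullet> v) * q"
    by (subst vu) (simp add: q_def)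
  define w where "w = X *v u"
  define g where "g = Gi *v w"
  have wg: "w = G *v g" using GiG by (simp add: g_def matrix_vector_mul_assoc)
  have xu: "x = Xt *v w + lam *\<^sub>R u" using Bu by (simp add: Bv w_def)
  have GT: "transpose G = G" by (simp add: G_def Xt_def matrix_transpose_mul)
  have GiT: "transpose Gi = Gi"
  proof -
    have "transpose Gi ** G = mat 1" using GiG GT by (metis matrix_transpose_mul transpose_mat)
    then have "transpose Gi ** G ** Gi = Gi" by simp
    moreover have "transpose Gi ** G ** Gi = transpose Gi ** (G ** Gi)" by (rule matrix_mul_assoc[symmetric])
    moreover have "transpose Gi ** (G ** Gi) = transpose Gi" using GiG by simp
    ultimately show ?thesis by simp
  qed
  have Xx: "X *v x = G *v w + lam *\<^sub>R w"
    by (simp add: xu Gv matrix_vector_right_distrib matrix_vector_mult_scaleR w_def)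
  have GiXx: "Gi *v (X *v x) = w + lam *\<^sub>R g"
    using GiG by (simp add: Xx matrix_vector_right_distrib matrix_vector_mult_scaleR g_def matrix_vector_mul_assoc)
  have Pv: "pinv_row X = Xt ** Gi" by (simp add: pinv_row_def Xt_def G_def Gi_def)
  define a where "a = w \<bullet> w"
  define b where "b = w \<bullet> g"
  define c where "c = g \<bullet> g"
  define d where "d = u \<bullet> u"
  have K0: "x \<bullet> ((pinv_row X ** transpose (pinv_row X)) *v x) = a + 2 * lam * b + lam^2 * c"
  proof -
    have "transpose (pinv_row X) = Gi ** X" using GiT by (simp add: Pv Xt_def matrix_transpose_mul)
    then have "x \<bullet> ((pinv_row X ** transpose (pinv_row X)) *v x) = (Gi *v (X *v x)) \<bullet> (Gi *v (X *v x))"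
      by (simp add: Pv Xt_def matrix_vector_mul_assoc[symmetric] adj inner_commute GiT)
    also have "\<dots> = a + 2 * lam * b + lam^2 * c"
      by (simp add: GiXx a_def b_def c_def inner_add_left inner_add_right inner_commute power2_eq_square algebra_simps)
    finally show ?thesis .
  qed
  have Gwg: "(G *v w) \<bullet> g = a" by (simp add: adj GT wg[symmetric] a_def)
  have XtwXtw: "(Xt *v w) \<bullet> (Xt *v w) = w \<bullet> (G *v w)" by (simp add: adj Gv Xt_def)
  have Xtwu: "(Xt *v w) \<bullet> u = a" by (simp add: adj Xt_def a_def w_def inner_commute)
  have Xtwu': "u \<bullet> (Xt *v w) = a" using Xtwu by (simp add: inner_commute)
  have xx: "x \<bullet> x = w \<bullet> (G *v w) + 2 * lam * a + lam^2 * d"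
    by (simp add: xu inner_add_left inner_add_right XtwXtw Xtwu Xtwu' d_def power2_eq_square algebra_simps)
  have Pterm: "x \<bullet> ((mat 1 - pinv_row X ** X) *v x) = x \<bullet> x - (X *v x) \<bullet> (Gi *v (X *v x))"
    by (simp add: Pv matrix_vector_mult_diff_rdistrib matrix_vector_mul_assoc[symmetric] inner_diff_right adj Xt_def)
  have pval: "x \<bullet> ((mat 1 - pinv_row X ** X) *v x) = lam^2 * d - lam^2 * b"
    unfolding Pterm GiXx unfolding Xx xx
    by (simp add: inner_add_left inner_add_right Gwg inner_commute[of "G *v w" w] b_def a_def power2_eq_square algebra_simps)
  have qval: "q = a + lam * d"
    by (simp add: q_def xu inner_add_left Xtwu d_def)
  have bnn: "b \<ge> 0"
  proof -
    have "b = (Xt *v g) \<bullet> (Xt *v g)" by (simp add: b_def wg adj Gv Xt_def inner_commute)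
    then show ?thesis by simp
  qed
  have cnn: "c \<ge> 0" by (simp add: c_def)
  have ann: "a \<ge> 0" by (simp add: a_def)
  have dnn: "d \<ge> 0" by (simp add: d_def)
  have qnn: "q \<ge> 0" using qval ann dnn assms(4) by simp
  define e where "e = y - x \<bullet> ridge lam X Y"
  have th: "theta_hat lam X Y x y = ridge lam X Y + e *\<^sub>R v"
    by (simp add: theta_hat_def e_def v_def A_def R_def)
  have res: "y - x \<bullet> theta_hat lam X Y x y = e / (1 + q)"
  proof -
    have "1 - x \<bullet> v = 1 / (1 + q)" using xv qnn by (simp add: field_simps)
    moreover have "y - x \<bullet> theta_hat lam X Y x y = e * (1 - x \<bullet> v)"
      by (simp add: th inner_add_right e_def algebra_simps)
    ultimately show ?thesis by simp
  qed
  define K where "K = 1 + x \<bullet> ((pinv_row X ** transpose (pinv_row X)) *v x)"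
  define p where "p = x \<bullet> ((mat 1 - pinv_row X ** X) *v x)"
  have Kpos: "K \<ge> 1" using K0 ann bnn cnn assms(4) by (simp add: K_def)
  have D: "K^2 * (1 + p / (K * lam))^2 = (K + p / lam)^2"
    using Kpos assms(4) by (simp add: field_simps power2_eq_square)
  have key: "1 + q \<le> K + p / lam"
  proof -
    have "K + p / lam - (1 + q) = lam * b + lam^2 * c"
      using assms(4) by (simp add: K_def p_def K0 pval qval field_simps power2_eq_square)
    moreover have "lam * b + lam^2 * c \<ge> 0" using bnn cnn assms(4) by simp
    ultimately show ?thesis by linarith
  qed
  have sq: "(1 + q)^2 \<le> (K + p / lam)^2" using key qnn by (simp add: power_mono)
  have ineq: "e^2 / (2 * \<sigma>2 * (K + p / lam)^2) \<le> (1 / (2 * \<sigma>2)) * (e / (1 + q))^2"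
  proof -
    have "e^2 / (2 * \<sigma>2 * (K + p / lam)^2) \<le> e^2 / (2 * \<sigma>2 * (1 + q)^2)"
      apply (rule divide_left_mono)
      using sq assms(3) qnn by (auto intro!: mult_pos_pos)
    also have "\<dots> = (1 / (2 * \<sigma>2)) * (e / (1 + q))^2" by (simp add: power_divide)
    finally show ?thesis .
  qed
  have "gauss_lik \<sigma>2 (theta_hat lam X Y x y) x y = 1 / sqrt (2 * pi * \<sigma>2) * exp (- (1 / (2 * \<sigma>2)) * (e / (1 + q))^2)"
    by (simp add: gauss_lik_def res)
  also have "\<dots> \<le> 1 / sqrt (2 * pi * \<sigma>2) * exp (- (e^2 / (2 * \<sigma>2 * (K + p / lam)^2)))"
    using ineq assms(3) by (intro mult_left_mono) auto
  also have "\<dots> = 1 / sqrt (2 * pi * \<sigma>2) * exp (- (e^2 / (2 * \<sigma>2 * K^2 * (1 + p / (K * lam))^2)))"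
    using D by (simp add: mult.assoc)
  finally show ?thesis by (simp add: e_def K_def p_def)
qed

end
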